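(* Let $n\ge 2$ and let $A\in\mathbb{R}^{n\times n}$ be a nonnegative hollow tridiagonal matrix (so $A_{ii}=0$ for all $i$ and $A_{ij}=0$ when $|i-j|>1$) such that $A_{i,i+1}A_{i+1,i}=0$ for each $i\in\{1,\dots,n-1\}$, and $A_{i,i+1}>0$ for at least one $i$. Then $r(t):=r\big((1-t)A+tA^{\top}\big)$ is strictly concave in $t$ on $(0,1)$.
   Context: $r(M)$ denotes the spectral radius of a square matrix $M$. *)

theory Defs
  imports "HOL-Analysis.Convex" "Jordan_Normal_Form.Spectral_Radius"
begin

definition strict_concave_on :: "real set \<Rightarrow> (real \<Rightarrow> real) \<Rightarrow> bool" where
  "strict_concave_on S f \<longleftrightarrow> convex S \<and>
     (\<forall>x\<in>S. \<forall>y\<in>S. x \<noteq> y \<longrightarrow> (\<forall>u::real. 0 < u \<and> u < 1 \<longrightarrow>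
        f (u * x + (1 - u) * y) > u * f x + (1 - u) * f y))"

definition real_spectral_radius :: "real mat \<Rightarrow> real" where
  "real_spectral_radius M = spectral_radius (map_mat complex_of_real M)"

end

theory Submission
  imports Defs
begin

lemma smult_mat_mult_vec: assumes "B \<in> carrier_mat n n" "v \<in> carrier_vec n"
  shows "(c \<cdot>\<^sub>m B) *\<^sub>v v = (c :: complex) \<cdot>\<^sub>v (B *\<^sub>v v)"
  using assms by (intro eq_vecI) (auto simp: scalar_prod_def sum_distrib_left mult.assoc)

lemma spectrum_smult: assumes B: "B \<in> carrier_mat n n" and c: "(c::complex) \<noteq> 0"
  shows "spectrum (c \<cdot>\<^sub>m B) = (\<lambda>x. c * x) ` spectrum B"
proof -
  have "eigenvector (c \<cdot>\<^sub>m B) v (c * k) \<longleftrightarrow> eigenvector B v k" for v k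
  proof -
    have "v \<in> carrier_vec n \<Longrightarrow> ((c \<cdot>\<^sub>m B) *\<^sub>v v = (c * k) \<cdot>\<^sub>v v) \<longleftrightarrow> (B *\<^sub>v v = k \<cdot>\<^sub>v v)"
    proof -
      assume v: "v \<in> carrier_vec n"
      have "(c \<cdot>\<^sub>m B) *\<^sub>v v = (c * k) \<cdot>\<^sub>v v \<longleftrightarrow> c \<cdot>\<^sub>v (B *\<^sub>v v) = c \<cdot>\<^sub>v (k \<cdot>\<^sub>v v)"
        using smult_mat_mult_vec[OF B v] by (simp add: smult_smult_assoc)
      also have "\<dots> \<longleftrightarrow> B *\<^sub>v v = k \<cdot>\<^sub>v v"
      proof
        assume "c \<cdot>\<^sub>v (B *\<^sub>v v) = c \<cdot>\<^sub>v (k \<cdot>\<^sub>v v)"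
        hence "inverse c \<cdot>\<^sub>v (c \<cdot>\<^sub>v (B *\<^sub>v v)) = inverse c \<cdot>\<^sub>v (c \<cdot>\<^sub>v (k \<cdot>\<^sub>v v))" by simp
        thus "B *\<^sub>v v = k \<cdot>\<^sub>v v" using c by (simp add: smult_smult_assoc mult.assoc[symmetric])
      qed simp
      finally show ?thesis .
    qed
    thus ?thesis unfolding eigenvector_def using B by auto
  qed
  hence ev: "eigenvalue (c \<cdot>\<^sub>m B) (c * k) \<longleftrightarrow> eigenvalue B k" for k
    unfolding eigenvalue_def by auto
  show ?thesis
  proof (rule Set.set_eqI)
    fix x
    have "x = c * (x / c)" using c by simp
    hence "x \<in> spectrum (c \<cdot>\<^sub>m B) \<longleftrightarrow> eigenvalue B (x / c)"
      using ev[of "x/c"] unfolding spectrum_def by simp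
    also have "\<dots> \<longleftrightarrow> x \<in> (\<lambda>x. c * x) ` spectrum B"
      unfolding spectrum_def using c by (auto simp: image_iff)
    finally show "x \<in> spectrum (c \<cdot>\<^sub>m B) \<longleftrightarrow> x \<in> (\<lambda>x. c * x) ` spectrum B" .
  qed
qed

lemma spectral_radius_smult: assumes B: "B \<in> carrier_mat n n" and c: "(c::complex) \<noteq> 0" and n: "n > 0"
  shows "spectral_radius (c \<cdot>\<^sub>m B) = norm c * spectral_radius B"
proof -
  have fin: "finite (norm ` spectrum B)" using card_finite_spectrum[OF B] by auto
  have ne: "norm ` spectrum B \<noteq> {}" using spectrum_non_empty[OF B n] by auto
  have "norm ` spectrum (c \<cdot>\<^sub>m B) = (\<lambda>y. norm c * y) ` (norm ` spectrum B)"
    unfolding spectrum_smult[OF B c] image_image by (simp add: norm_mult)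
  moreover have "mono (\<lambda>y. norm c * y)" by (intro monoI mult_left_mono) auto
  ultimately show ?thesis unfolding spectral_radius_def
    using mono_Max_commute[OF _ fin ne] by metis
qed

lemma pos_comb: fixes a b t :: real assumes "a \<ge> 0" "b \<ge> 0" "a + b \<noteq> 0" "0 < t" "t < 1"
  shows "(1 - t) * a + t * b > 0"
proof (cases "a > 0")
  case True
  thus ?thesis using assms by (simp add: add_pos_nonneg)
next
  case False
  hence "b > 0" using assms by auto
  thus ?thesis using assms False by (simp add: add_nonneg_pos)
qed
lemma diag_mult_left: assumes "X \<in> carrier_mat n m" "i < n" "j < m"
  shows "(mat n n (\<lambda>(i,j). if i = j then p i else 0) * X) $$ (i,j) = p i * X $$ (i,j)"
proof -
  have "(mat n n (\<lambda>(i,j). if i = j then p i else 0) * X) $$ (i,j) = (\<Sum>k = 0..<n. (if i = k then p i else 0) * X $$ (k,j))"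
    using assms by (simp add: scalar_prod_def)
  also have "\<dots> = (\<Sum>k \<in> {0..<n}. (if i = k then p i * X $$ (k,j) else 0))"
    by (rule sum.cong) auto
  finally show ?thesis using assms by simp
qed
lemma diag_mult_right: assumes "X \<in> carrier_mat m n" "i < m" "j < n"
  shows "(X * mat n n (\<lambda>(i,j). if i = j then p i else 0)) $$ (i,j) = X $$ (i,j) * p j"
proof -
  have "(X * mat n n (\<lambda>(i,j). if i = j then p i else 0)) $$ (i,j) = (\<Sum>k = 0..<n. X $$ (i,k) * (if k = j then p k else 0))"
    using assms by (simp add: scalar_prod_def)
  also have "\<dots> = (\<Sum>k \<in> {0..<n}. (if k = j then X $$ (i,k) * p j else 0))"
    by (rule sum.cong) auto
  finally show ?thesis using assms by simp
qed
lemma real_entry: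
  fixes A :: "real mat" and n :: nat and t :: real
  assumes A: "A \<in> carrier_mat n n"
    and nn: "\<forall>i<n. \<forall>j<n. A $$ (i, j) \<ge> 0"
    and dg: "\<forall>i<n. A $$ (i, i) = 0"
    and tri: "\<forall>i<n. \<forall>j<n. (i + 1 < j \<or> j + 1 < i) \<longrightarrow> A $$ (i, j) = 0"
    and pr: "\<forall>i. i + 1 < n \<longrightarrow> A $$ (i, i + 1) * A $$ (i + 1, i) = 0"
    and t: "0 < t" "t < 1"
    and rr_def: "rr = (\<lambda>i. if A $$ (i, i+1) + A $$ (i+1, i) = 0 then 1
        else sqrt (t * (1 - t)) * (A $$ (i, i+1) + A $$ (i+1, i)) / ((1 - t) * A $$ (i, i+1) + t * A $$ (i+1, i)))"
    and d_def: "d = (\<lambda>i. prod rr {..<i})"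
    and ij: "i < n" "j < n"
  shows "((1 - t) \<cdot>\<^sub>m A + t \<cdot>\<^sub>m transpose_mat A) $$ (i, j)
     = d i * (sqrt (t * (1 - t)) * (A + transpose_mat A) $$ (i, j)) * (1 / d j)"
proof -
  define s where "s = sqrt (t * (1 - t))"
  have s: "s > 0" "s * s = t * (1 - t)" using t unfolding s_def by (auto simp: mult_pos_pos)
  have rrpos: "rr k > 0" if "k + 1 < n" for k
  proof -
    have "A $$ (k, k+1) \<ge> 0" "A $$ (k+1, k) \<ge> 0" using nn that by auto
    thus ?thesis using s t pos_comb[of "A $$ (k, k+1)" "A $$ (k+1, k)" t] unfolding rr_def s_def[symmetric]
      by (auto intro!: divide_pos_pos mult_pos_pos add_pos_nonneg add_nonneg_pos simp: less_le)
  qed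
  have dpos: "k < n \<Longrightarrow> d k > 0" for k unfolding d_def
    by (intro prod_pos) (auto intro: rrpos)
  have lhs: "((1 - t) \<cdot>\<^sub>m A + t \<cdot>\<^sub>m transpose_mat A) $$ (i, j) = (1 - t) * A $$ (i,j) + t * A $$ (j,i)"
    using A ij by simp
  have rhs: "(A + transpose_mat A) $$ (i, j) = A $$ (i,j) + A $$ (j,i)"
    using A ij by simp
  have "(1 - t) * A $$ (i,j) + t * A $$ (j,i) = d i * (s * (A $$ (i,j) + A $$ (j,i))) * (1 / d j)"
  proof (cases "j = i + 1")
    case True
    define a where "a = A $$ (i, i+1)"
    define b where "b = A $$ (i+1, i)"
    have ab: "a \<ge> 0" "b \<ge> 0" "a * b = 0" using nn pr ij True unfolding a_def b_def by auto
    have dj: "d j = d i * rr i" unfolding True d_def by simp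
    have di: "d i > 0" using dpos ij by auto
    show "(1 - t) * A $$ (i, j) + t * A $$ (j, i) = d i * (s * (A $$ (i, j) + A $$ (j, i))) * (1 / d j)"
    proof (cases "a + b = 0")
      case True2: True
      hence "a = 0" "b = 0" using ab by auto
      thus ?thesis using True unfolding a_def b_def by simp
    next
      case False
      have m: "(1 - t) * a + t * b > 0" using ab t False by (intro pos_comb) auto
      have rri: "rr i = s * (a + b) / ((1 - t) * a + t * b)" using False unfolding rr_def a_def b_def s_def by simp
      have "a + b > 0" using ab False by auto
      have e: "A $$ (i,j) = a" "A $$ (j,i) = b" using True unfolding a_def b_def by auto
      have nz: "d i * (s * (a + b)) \<noteq> 0" using \<open>a + b > 0\<close> di s by simp
      have "d i * (s * (a + b)) * (1 / (d i * (s * (a + b) / ((1 - t) * a + t * b)))) = (1 - t) * a + t * b"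
        using nz m by (simp add: field_simps)
      thus ?thesis unfolding e dj rri by simp
    qed
  next
    case False
    show ?thesis
    proof (cases "i = j + 1")
      case True
      define a where "a = A $$ (j, j+1)"
      define b where "b = A $$ (j+1, j)"
      have ab: "a \<ge> 0" "b \<ge> 0" "a * b = 0" using nn pr ij True unfolding a_def b_def by auto
      have dj: "d i = d j * rr j" unfolding True d_def by simp
      have di: "d j > 0" using dpos ij by auto
      show ?thesis
      proof (cases "a + b = 0")
        case True2: True
        hence "a = 0" "b = 0" using ab by auto
        thus ?thesis using True lhs rhs unfolding a_def b_def s_def by simp
      next
        case False
        have m: "(1 - t) * a + t * b > 0" using ab t False by (intro pos_comb) auto
        have rri: "rr j = s * (a + b) / ((1 - t) * a + t * b)" using False unfolding rr_def a_def b_def s_def by simp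
        have key: "((1 - t) * b + t * a) * ((1 - t) * a + t * b) = s * s * ((a + b) * (a + b))"
        proof -
          have "((1 - t) * b + t * a) * ((1 - t) * a + t * b) - t * (1 - t) * ((a + b) * (a + b)) = (a * b) * ((1 - 2 * t) * (1 - 2 * t))"
            by (simp add: algebra_simps)
          thus ?thesis unfolding s(2) using ab(3) by simp
        qed
        have "(1 - t) * b + t * a = s * (a + b) * (s * (a + b)) / ((1 - t) * a + t * b)"
          using key m by (simp add: field_simps)
        moreover have e: "A $$ (i,j) = b" "A $$ (j,i) = a" using True unfolding a_def b_def by auto
        moreover have "d j * (s * (a + b) / ((1 - t) * a + t * b)) * (s * (b + a)) * (1 / d j) = s * (a + b) * (s * (a + b)) / ((1 - t) * a + t * b)"
        proof -
          have "d j * (s * (a + b) / ((1 - t) * a + t * b)) * (s * (b + a)) * (1 / d j) = (s * (a + b) / ((1 - t) * a + t * b)) * (s * (b + a))"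
            using di by simp
          thus ?thesis by (simp add: add.commute)
        qed
        ultimately show ?thesis unfolding lhs rhs s_def[symmetric] e dj rri
          by linarith
      qed
    next
      case False2: False
      show ?thesis
      proof (cases "i = j")
        case True
        thus ?thesis using dg ij lhs rhs by simp
      next
        case False
        hence "i + 1 < j \<or> j + 1 < i" using False2 \<open>j \<noteq> i + 1\<close> by linarith
        hence "A $$ (i,j) = 0" "A $$ (j,i) = 0" using tri ij by auto
        thus ?thesis using lhs rhs by simp
      qed
    qed
  qed
  thus ?thesis unfolding lhs rhs s_def .
qed

lemma sr_formula:
  fixes A :: "real mat" and n :: nat and t :: real
  assumes A: "A \<in> carrier_mat n n" and n: "n > 0"
    and nn: "\<forall>i<n. \<forall>j<n. A $$ (i, j) \<ge> 0"
    and dg: "\<forall>i<n. A $$ (i, i) = 0"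
    and tri: "\<forall>i<n. \<forall>j<n. (i + 1 < j \<or> j + 1 < i) \<longrightarrow> A $$ (i, j) = 0"
    and pr: "\<forall>i. i + 1 < n \<longrightarrow> A $$ (i, i + 1) * A $$ (i + 1, i) = 0"
    and t: "0 < t" "t < 1"
  shows "spectral_radius (map_mat complex_of_real ((1 - t) \<cdot>\<^sub>m A + t \<cdot>\<^sub>m transpose_mat A))
     = sqrt (t * (1 - t)) * spectral_radius (map_mat complex_of_real (A + transpose_mat A))"
proof -
  define s where "s = sqrt (t * (1 - t))"
  have s: "s > 0" using t unfolding s_def by (auto simp: mult_pos_pos)
  define rr where "rr = (\<lambda>i. if A $$ (i, i+1) + A $$ (i+1, i) = 0 then 1
        else sqrt (t * (1 - t)) * (A $$ (i, i+1) + A $$ (i+1, i)) / ((1 - t) * A $$ (i, i+1) + t * A $$ (i+1, i)))"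
  define d where "d = (\<lambda>i. prod rr {..<i})"
  have rrpos: "rr k > 0" if "k + 1 < n" for k
  proof -
    have "A $$ (k, k+1) \<ge> 0" "A $$ (k+1, k) \<ge> 0" using nn that by auto
    thus ?thesis using s t pos_comb[of "A $$ (k, k+1)" "A $$ (k+1, k)" t] unfolding rr_def s_def[symmetric]
      by (auto intro!: divide_pos_pos mult_pos_pos add_pos_nonneg add_nonneg_pos simp: less_le)
  qed
  have dpos: "k < n \<Longrightarrow> d k > 0" for k unfolding d_def
    by (intro prod_pos) (auto intro: rrpos)
  define P where "P = mat n n (\<lambda>(i,j). if i = j then complex_of_real (d i) else 0)"
  define Q where "Q = mat n n (\<lambda>(i,j). if i = j then complex_of_real (1 / d i) else 0)"
  define Mc where "Mc = map_mat complex_of_real ((1 - t) \<cdot>\<^sub>m A + t \<cdot>\<^sub>m transpose_mat A)"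
  define Bc where "Bc = map_mat complex_of_real (A + transpose_mat A)"
  define c where "c = complex_of_real s"
  have c: "c \<noteq> 0" using s unfolding c_def by simp
  have car: "Mc \<in> carrier_mat n n" "Bc \<in> carrier_mat n n" "P \<in> carrier_mat n n" "Q \<in> carrier_mat n n"
    "c \<cdot>\<^sub>m Bc \<in> carrier_mat n n"
    unfolding Mc_def Bc_def P_def Q_def using A by auto
  have "similar_mat Mc (c \<cdot>\<^sub>m Bc)"
  proof (rule similar_matI[of _ _ P Q n])
    show "{Mc, c \<cdot>\<^sub>m Bc, P, Q} \<subseteq> carrier_mat n n" using car by auto
    show "P * Q = 1\<^sub>m n"
    proof (rule eq_matI)
      fix i j assume ij: "i < dim_row (1\<^sub>m n)" "j < dim_col (1\<^sub>m n)"
      hence "(P * Q) $$ (i,j) = complex_of_real (d i) * Q $$ (i,j)"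
        unfolding P_def using car by (intro diag_mult_left) auto
      also have "\<dots> = 1\<^sub>m n $$ (i,j)" using ij dpos[of i] unfolding Q_def by auto
      finally show "(P * Q) $$ (i,j) = 1\<^sub>m n $$ (i,j)" .
    qed (use car in auto)
    show "Q * P = 1\<^sub>m n"
    proof (rule eq_matI)
      fix i j assume ij: "i < dim_row (1\<^sub>m n)" "j < dim_col (1\<^sub>m n)"
      hence "(Q * P) $$ (i,j) = complex_of_real (1 / d i) * P $$ (i,j)"
        unfolding Q_def using car by (intro diag_mult_left) auto
      also have "\<dots> = 1\<^sub>m n $$ (i,j)" using ij dpos[of i] unfolding P_def by auto
      finally show "(Q * P) $$ (i,j) = 1\<^sub>m n $$ (i,j)" .
    qed (use car in auto)
    show "Mc = P * (c \<cdot>\<^sub>m Bc) * Q"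
    proof (rule eq_matI)
      fix i j assume ij: "i < dim_row (P * (c \<cdot>\<^sub>m Bc) * Q)" "j < dim_col (P * (c \<cdot>\<^sub>m Bc) * Q)"
      hence ij: "i < n" "j < n" using car by auto
      have "(P * (c \<cdot>\<^sub>m Bc) * Q) $$ (i,j) = (P * (c \<cdot>\<^sub>m Bc)) $$ (i,j) * complex_of_real (1 / d j)"
        unfolding Q_def using car ij by (intro diag_mult_right) auto
      also have "(P * (c \<cdot>\<^sub>m Bc)) $$ (i,j) = complex_of_real (d i) * (c \<cdot>\<^sub>m Bc) $$ (i,j)"
        unfolding P_def using car ij by (intro diag_mult_left) auto
      also have "(c \<cdot>\<^sub>m Bc) $$ (i,j) = complex_of_real (s * (A + transpose_mat A) $$ (i, j))"
        unfolding c_def Bc_def using A ij by simp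
      finally have "(P * (c \<cdot>\<^sub>m Bc) * Q) $$ (i,j) = complex_of_real (d i * (s * (A + transpose_mat A) $$ (i, j)) * (1 / d j))"
        by simp
      also have "\<dots> = Mc $$ (i,j)"
        unfolding Mc_def using A ij
          real_entry[OF A nn dg tri pr t rr_def d_def ij] unfolding s_def by simp
      finally show "Mc $$ (i,j) = (P * (c \<cdot>\<^sub>m Bc) * Q) $$ (i,j)" by simp
    qed (use car in auto)
  qed
  hence "char_poly Mc = char_poly (c \<cdot>\<^sub>m Bc)" by (rule char_poly_similar)
  hence "spectrum Mc = spectrum (c \<cdot>\<^sub>m Bc)"
    using spectrum_root_char_poly[OF car(1)] spectrum_root_char_poly[OF car(5)] by simp
  hence "spectral_radius Mc = spectral_radius (c \<cdot>\<^sub>m Bc)" unfolding spectral_radius_def by simp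
  also have "\<dots> = norm c * spectral_radius Bc" by (rule spectral_radius_smult[OF car(2) c n])
  also have "norm c = s" unfolding c_def using s by simp
  finally show ?thesis unfolding Mc_def Bc_def s_def .
qed

lemma mult_entry: assumes "X \<in> carrier_mat n n" "Y \<in> carrier_mat n n" "i < n" "j < n"
  shows "(X * Y) $$ (i,j) = (\<Sum>l<n. X $$ (i,l) * Y $$ (l,j))"
  using assms by (simp add: scalar_prod_def atLeast0LessThan)

lemma nonneg_pow:
  fixes N :: "real mat"
  assumes N: "N \<in> carrier_mat n n" and nn: "\<forall>i<n. \<forall>j<n. N $$ (i,j) \<ge> 0"
  shows "(\<forall>i<n. \<forall>j<n. (N ^\<^sub>m k) $$ (i,j) \<ge> 0) \<and> (\<forall>i<n. (N ^\<^sub>m k) $$ (i,i) \<ge> N $$ (i,i) ^ k)"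
proof (induct k)
  case 0
  show ?case using N by auto
next
  case (Suc k)
  have car: "N ^\<^sub>m k \<in> carrier_mat n n" using N by auto
  have e: "(N ^\<^sub>m Suc k) $$ (i,j) = (\<Sum>l<n. (N ^\<^sub>m k) $$ (i,l) * N $$ (l,j))" if "i < n" "j < n" for i j
    using mult_entry[OF car N that] by simp
  have 1: "\<forall>i<n. \<forall>j<n. (N ^\<^sub>m Suc k) $$ (i,j) \<ge> 0"
  proof (intro allI impI)
    fix i j assume ij: "i < n" "j < n"
    show "(N ^\<^sub>m Suc k) $$ (i,j) \<ge> 0" unfolding e[OF ij]
      using Suc nn ij by (auto intro!: sum_nonneg)
  qed
  have 2: "(N ^\<^sub>m Suc k) $$ (i,i) \<ge> N $$ (i,i) ^ Suc k" if i: "i < n" for i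
  proof -
    have "N $$ (i,i) ^ Suc k = N $$ (i,i) ^ k * N $$ (i,i)" by simp
    also have "\<dots> \<le> (N ^\<^sub>m k) $$ (i,i) * N $$ (i,i)"
      using Suc i nn by (intro mult_right_mono) auto
    also have "\<dots> \<le> (\<Sum>l<n. (N ^\<^sub>m k) $$ (i,l) * N $$ (l,i))"
      using Suc i nn by (intro member_le_sum[where f = "\<lambda>l. (N ^\<^sub>m k) $$ (i,l) * N $$ (l,i)"]) auto
    finally show ?thesis using e[OF i i] by simp
  qed
  show ?case using 1 2 by auto
qed

lemma pow_double: assumes M: "M \<in> carrier_mat n n"
  shows "(M * M) ^\<^sub>m k = M ^\<^sub>m (2 * k)"
proof (induct k)
  case (Suc k)
  have "(M * M) ^\<^sub>m Suc k = M ^\<^sub>m (2 * k) * (M * M)" using Suc by simp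
  also have "\<dots> = M ^\<^sub>m (2 * k) * M * M" using M by (simp add: assoc_mult_mat[symmetric, of _ n n _ n _ n])
  also have "\<dots> = M ^\<^sub>m (2 * Suc k)" by simp
  finally show ?case .
qed simp

lemma sr_pos:
  fixes B :: "real mat"
  assumes B: "B \<in> carrier_mat n n" and nn: "\<forall>i<n. \<forall>j<n. B $$ (i,j) \<ge> 0"
    and ij: "i0 < n" "j0 < n" and pos: "B $$ (i0,j0) > 0" "B $$ (j0,i0) > 0"
  shows "spectral_radius (map_mat complex_of_real B) > 0"
proof (rule ccontr)
  define Bc where "Bc = map_mat complex_of_real B"
  have Bc: "Bc \<in> carrier_mat n n" using B unfolding Bc_def by auto
  have n: "n > 0" using ij by auto
  have "spectral_radius Bc \<ge> 0" using spectral_radius_mem_max(1)[OF Bc n] by auto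
  moreover assume "\<not> spectral_radius (map_mat complex_of_real B) > 0"
  ultimately have rho: "spectral_radius Bc = 0" unfolding Bc_def by auto
  define q where "q = (B * B) $$ (i0, i0)"
  have "B $$ (i0,j0) * B $$ (j0,i0) \<le> (\<Sum>l<n. B $$ (i0,l) * B $$ (l,i0))"
    using ij nn by (intro member_le_sum[where f = "\<lambda>l. B $$ (i0,l) * B $$ (l,i0)"]) auto
  hence q: "q > 0" unfolding q_def mult_entry[OF B B ij(1) ij(1)]
    using pos by (smt (verit) mult_pos_pos)
  define lam where "lam = sqrt (2 / q)"
  have lam: "lam > 0" "lam * lam * q = 2" using q unfolding lam_def by auto
  define M where "M = lam \<cdot>\<^sub>m B"
  have M: "M \<in> carrier_mat n n" using B unfolding M_def by auto
  define N where "N = M * M"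
  have N: "N \<in> carrier_mat n n" using M unfolding N_def by auto
  have Mnn: "\<forall>i<n. \<forall>j<n. M $$ (i,j) \<ge> 0" using nn lam B unfolding M_def by auto
  have Nnn: "\<forall>i<n. \<forall>j<n. N $$ (i,j) \<ge> 0" unfolding N_def
    using Mnn by (auto simp: mult_entry[OF M M] intro!: sum_nonneg)
  have "N $$ (i0,i0) = (\<Sum>l<n. lam * B $$ (i0,l) * (lam * B $$ (l,i0)))"
    unfolding N_def mult_entry[OF M M ij(1) ij(1)] unfolding M_def using B ij by (intro sum.cong) auto
  also have "\<dots> = lam * lam * q" unfolding q_def mult_entry[OF B B ij(1) ij(1)]
    by (simp add: sum_distrib_left algebra_simps)
  finally have N2: "N $$ (i0,i0) = 2" using lam by simp
  define C where "C = complex_of_real lam \<cdot>\<^sub>m Bc"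
  have "spectral_radius C = norm (complex_of_real lam) * spectral_radius Bc"
    unfolding C_def by (rule spectral_radius_smult[OF Bc _ n]) (use lam in auto)
  hence "spectral_radius C < 1" using rho by simp
  from spectral_radius_jnf_norm_bound_less_1_upper_triangular[OF _ this]
  obtain K where K: "\<And>k. norm_bound (C ^\<^sub>m k) K" using Bc unfolding C_def by fastforce
  have CM: "C = map_mat complex_of_real M" unfolding C_def M_def Bc_def by (rule eq_matI) auto
  have big: "2 ^ k \<le> K" for k
  proof -
    have "C ^\<^sub>m (2 * k) = map_mat complex_of_real (N ^\<^sub>m k)"
      unfolding CM N_def pow_double[OF M] of_real_hom.mat_hom_pow[OF M] ..
    moreover have "norm_bound (C ^\<^sub>m (2 * k)) K" by (rule K)
    ultimately have "norm (complex_of_real ((N ^\<^sub>m k) $$ (i0,i0))) \<le> K"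
      unfolding norm_bound_def using N ij by auto
    moreover have "(N ^\<^sub>m k) $$ (i0,i0) \<ge> 2 ^ k"
      using nonneg_pow[OF N Nnn, of k] ij N2 by auto
    ultimately show ?thesis by simp
  qed
  obtain k :: nat where "real k > K" using reals_Archimedean2 by blast
  moreover have "real k < 2 ^ k" using of_nat_less_iff[where ?'a=real, THEN iffD2, OF less_exp[of k]] by simp
  ultimately show False using big[of k] by simp
qed


lemma sqrt_strict:
  fixes x y u :: real
  assumes "0 < x" "x < 1" "0 < y" "y < 1" "x \<noteq> y" "0 < u" "u < 1"
  shows "sqrt ((u * x + (1 - u) * y) * (1 - (u * x + (1 - u) * y)))
     > u * sqrt (x * (1 - x)) + (1 - u) * sqrt (y * (1 - y))"
proof -
  define p where "p = sqrt (x * (1 - x))"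
  define q where "q = sqrt (y * (1 - y))"
  have pq: "p \<ge> 0" "q \<ge> 0" "p * p = x * (1 - x)" "q * q = y * (1 - y)"
    using assms unfolding p_def q_def by auto
  have "(u * p + (1 - u) * q)^2 = u * (p * p) + (1 - u) * (q * q) - u * (1 - u) * (p - q)^2"
    by (simp add: power2_eq_square algebra_simps)
  also have "\<dots> \<le> u * (p * p) + (1 - u) * (q * q)" using assms by simp
  also have "\<dots> = u * (x * (1 - x)) + (1 - u) * (y * (1 - y))" using pq by simp
  also have "\<dots> = (u * x + (1 - u) * y) * (1 - (u * x + (1 - u) * y)) - u * (1 - u) * (x - y)^2"
    by (simp add: power2_eq_square algebra_simps)
  also have "\<dots> < (u * x + (1 - u) * y) * (1 - (u * x + (1 - u) * y))"
    using assms by simp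
  finally show ?thesis unfolding p_def[symmetric] q_def[symmetric] by (rule real_less_rsqrt)
qed

theorem corollary1:
  fixes A :: "real mat" and n :: nat
  assumes "n \<ge> 2"
    and "A \<in> carrier_mat n n"
    and "\<forall>i<n. \<forall>j<n. A $$ (i, j) \<ge> 0"
    and "\<forall>i<n. A $$ (i, i) = 0"
    and "\<forall>i<n. \<forall>j<n. (i + 1 < j \<or> j + 1 < i) \<longrightarrow> A $$ (i, j) = 0"
    and "\<forall>i. i + 1 < n \<longrightarrow> A $$ (i, i + 1) * A $$ (i + 1, i) = 0"
    and "\<exists>i. i + 1 < n \<and> A $$ (i, i + 1) > 0"
  shows "strict_concave_on {0<..<1}
           (\<lambda>t. real_spectral_radius ((1 - t) \<cdot>\<^sub>m A + t \<cdot>\<^sub>m transpose_mat A))"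
proof -
  note A = assms(2) and nn = assms(3) and dg = assms(4) and tri = assms(5) and pr = assms(6)
  have n: "n > 0" using assms(1) by auto
  define B where "B = A + transpose_mat A"
  have Bc: "B \<in> carrier_mat n n" using A unfolding B_def by auto
  have Bnn: "\<forall>i<n. \<forall>j<n. B $$ (i,j) \<ge> 0" using nn A unfolding B_def by auto
  obtain i0 where i0: "i0 + 1 < n" "A $$ (i0, i0 + 1) > 0" using assms(7) by auto
  have "B $$ (i0, i0+1) > 0" "B $$ (i0+1, i0) > 0" using i0 A nn unfolding B_def
    by (auto intro: add_pos_nonneg add_nonneg_pos)
  hence rho: "real_spectral_radius B > 0" unfolding real_spectral_radius_def
    using i0 by (intro sr_pos[OF Bc Bnn, of i0 "i0+1"]) auto
  have f: "real_spectral_radius ((1 - t) \<cdot>\<^sub>m A + t \<cdot>\<^sub>m transpose_mat A) = sqrt (t * (1 - t)) * real_spectral_radius B"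
    if "t \<in> {0<..<1}" for t
    unfolding real_spectral_radius_def B_def using sr_formula[OF A n nn dg tri pr] that by auto
  show ?thesis unfolding strict_concave_on_def
  proof (intro conjI ballI allI impI)
    show "convex {0<..<(1::real)}" by (rule convex_real_interval)
    fix x y u :: real assume x: "x \<in> {0<..<1}" and y: "y \<in> {0<..<1}" and xy: "x \<noteq> y" and u: "0 < u \<and> u < 1"
    have z: "u * x + (1 - u) * y \<in> {0<..<1}"
    proof -
      have "u * x + (1 - u) * y > 0" using x y u by (auto intro: add_pos_pos)
      moreover have "u * x + (1 - u) * y < u * 1 + (1 - u) * 1" using x y u
        by (intro add_strict_mono mult_strict_left_mono) auto
      ultimately show ?thesis by simp
    qed
    have "u * sqrt (x * (1 - x)) + (1 - u) * sqrt (y * (1 - y)) < sqrt ((u * x + (1 - u) * y) * (1 - (u * x + (1 - u) * y)))"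
      using x y xy u by (intro sqrt_strict) auto
    hence "(u * sqrt (x * (1 - x)) + (1 - u) * sqrt (y * (1 - y))) * real_spectral_radius B
       < sqrt ((u * x + (1 - u) * y) * (1 - (u * x + (1 - u) * y))) * real_spectral_radius B"
      using rho by (rule mult_strict_right_mono)
    thus "u * real_spectral_radius ((1 - x) \<cdot>\<^sub>m A + x \<cdot>\<^sub>m A\<^sup>T) + (1 - u) * real_spectral_radius ((1 - y) \<cdot>\<^sub>m A + y \<cdot>\<^sub>m A\<^sup>T)
      < real_spectral_radius ((1 - (u * x + (1 - u) * y)) \<cdot>\<^sub>m A + (u * x + (1 - u) * y) \<cdot>\<^sub>m A\<^sup>T)"
      unfolding f[OF x] f[OF y] f[OF z] by (simp add: algebra_simps)
  qed
qed

end
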